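(* Let $G=(V,E,H)$ be a HEDG and $X,Y,Z\subseteq V$. Let $A=\mathrm{Anc}^G(X\cup Y\cup Z)$ with its induced sub-HEDG structure and $A^{\mathrm{moral}}$ its moralization. Then $X\perp^d_G Y\mid Z$ if and only if $X$ is separated from $Y$ given $Z$ in the undirected graph $A^{\mathrm{moral}}$.
   Context: A HEDG is $G=(V,E,H)$: $V$ finite, $E\subseteq V\times V$ directed edges (self-loops allowed), $H$ a simplicial complex on $V$ (contains all singletons, closed under subsets); for distinct $v,w$, $v\leftrightarrow w$ means $\{v,w\}\in H$. $\mathrm{Pa}^G(v)=\{u:(u,v)\in E\}$; $\mathrm{Anc}^G(S)$ = nodes with a directed path into $S$ (including $S$). The induced sub-HEDG on $A$ is $(A,E\cap A^2,\{F\in H:F\subseteq A\})$. Moralization: undirected graph on the node set with $v - w$ ($v\ne w$) iff there exist nodes $v_1,\dots,v_n$ ($n\ge1$) with $v\in\{v_1\}\cup\mathrm{Pa}(v_1)$, $w\in\{v_n\}\cup\mathrm{Pa}(v_n)$ and $v_1\leftrightarrow v_2\leftrightarrow\cdots\leftrightarrow v_n$. A path is a sequence of nodes (repetitions allowed, $n\ge1$) with consecutive nodes joined by an edge $\to$, $\leftarrow$ or $\leftrightarrow$. It is $Z$-blocked if an endnode is in $Z$, or some intermediate node $v_i$ is a collider (both adjacent edges have an arrowhead at $v_i$) with $v_i\notin\mathrm{Anc}^G(Z)$, or some intermediate non-collider lies in $Z$. $X\perp^d_G Y\mid Z$ iff every path with one endnode in $X$ and the other in $Y$ is $Z$-blocked.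 In an undirected graph, $X$ is separated from $Y$ given $Z$ if every path with one endnode in $X$ and the other in $Y$ contains a node of $Z$. *)

theory Defs
  imports Main
begin

definition hedg :: "'a set \<Rightarrow> ('a \<times> 'a) set \<Rightarrow> 'a set set \<Rightarrow> bool" where
  "hedg V E H \<longleftrightarrow> finite V \<and> E \<subseteq> V \<times> V \<and> H \<subseteq> Pow V
     \<and> (\<forall>v\<in>V. {v} \<in> H) \<and> (\<forall>F\<in>H. \<forall>F'. F' \<subseteq> F \<longrightarrow> F' \<in> H)"

definition bidir :: "'a set set \<Rightarrow> 'a \<Rightarrow> 'a \<Rightarrow> bool" where
  "bidir H v w \<longleftrightarrow> v \<noteq> w \<and> {v, w} \<in> H"

definition Pa :: "('a \<times> 'a) set \<Rightarrow> 'a \<Rightarrow> 'a set" where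
  "Pa E v = {u. (u, v) \<in> E}"

definition Anc :: "('a \<times> 'a) set \<Rightarrow> 'a set \<Rightarrow> 'a set" where
  "Anc E S = {u. \<exists>v\<in>S. (u, v) \<in> E\<^sup>*}"

definition induced_E :: "('a \<times> 'a) set \<Rightarrow> 'a set \<Rightarrow> ('a \<times> 'a) set" where
  "induced_E E A = E \<inter> (A \<times> A)"

definition induced_H :: "'a set set \<Rightarrow> 'a set \<Rightarrow> 'a set set" where
  "induced_H H A = {F \<in> H. F \<subseteq> A}"

definition moral_adj :: "'a set \<Rightarrow> ('a \<times> 'a) set \<Rightarrow> 'a set set \<Rightarrow> 'a \<Rightarrow> 'a \<Rightarrow> bool" where
  "moral_adj V E H v w \<longleftrightarrow> v \<noteq> w \<and>
     (\<exists>cs. cs \<noteq> [] \<and> set cs \<subseteq> V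
        \<and> (\<forall>i. Suc i < length cs \<longrightarrow> bidir H (cs ! i) (cs ! Suc i))
        \<and> v \<in> {hd cs} \<union> Pa E (hd cs) \<and> w \<in> {last cs} \<union> Pa E (last cs))"

text \<open>Edge kinds between consecutive nodes v_i, v_(i+1) of a path:
  Fwd: v_i \<rightarrow> v_(i+1); Bwd: v_i \<leftarrow> v_(i+1); Bi: v_i \<leftrightarrow> v_(i+1).\<close>
datatype ekind = Fwd | Bwd | Bi

definition edge_ok :: "('a \<times> 'a) set \<Rightarrow> 'a set set \<Rightarrow> 'a \<Rightarrow> ekind \<Rightarrow> 'a \<Rightarrow> bool" where
  "edge_ok E H v k w \<longleftrightarrow> (case k of
      Fwd \<Rightarrow> (v, w) \<in> E
    | Bwd \<Rightarrow> (w, v) \<in> E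
    | Bi \<Rightarrow> bidir H v w)"

definition is_path :: "'a set \<Rightarrow> ('a \<times> 'a) set \<Rightarrow> 'a set set \<Rightarrow> 'a list \<Rightarrow> ekind list \<Rightarrow> bool" where
  "is_path V E H vs es \<longleftrightarrow> vs \<noteq> [] \<and> set vs \<subseteq> V \<and> length es = length vs - 1
     \<and> (\<forall>i < length es. edge_ok E H (vs ! i) (es ! i) (vs ! Suc i))"

definition collider :: "ekind list \<Rightarrow> nat \<Rightarrow> bool" where
  "collider es i \<longleftrightarrow> (es ! (i - 1) = Fwd \<or> es ! (i - 1) = Bi) \<and> (es ! i = Bwd \<or> es ! i = Bi)"

definition blocked :: "('a \<times> 'a) set \<Rightarrow> 'a set \<Rightarrow> 'a list \<Rightarrow> ekind list \<Rightarrow> bool" where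
  "blocked E Z vs es \<longleftrightarrow> hd vs \<in> Z \<or> last vs \<in> Z \<or>
     (\<exists>i. 0 < i \<and> i < length vs - 1 \<and>
        ((collider es i \<and> vs ! i \<notin> Anc E Z) \<or> (\<not> collider es i \<and> vs ! i \<in> Z)))"

definition d_sep :: "'a set \<Rightarrow> ('a \<times> 'a) set \<Rightarrow> 'a set set \<Rightarrow> 'a set \<Rightarrow> 'a set \<Rightarrow> 'a set \<Rightarrow> bool" where
  "d_sep V E H X Y Z \<longleftrightarrow> (\<forall>vs es. is_path V E H vs es \<and>
      ((hd vs \<in> X \<and> last vs \<in> Y) \<or> (hd vs \<in> Y \<and> last vs \<in> X))
      \<longrightarrow> blocked E Z vs es)"

definition upath :: "'a set \<Rightarrow> ('a \<Rightarrow> 'a \<Rightarrow> bool) \<Rightarrow> 'a list \<Rightarrow> bool" where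
  "upath N adj vs \<longleftrightarrow> vs \<noteq> [] \<and> set vs \<subseteq> N
     \<and> (\<forall>i. Suc i < length vs \<longrightarrow> adj (vs ! i) (vs ! Suc i))"

definition usep :: "'a set \<Rightarrow> ('a \<Rightarrow> 'a \<Rightarrow> bool) \<Rightarrow> 'a set \<Rightarrow> 'a set \<Rightarrow> 'a set \<Rightarrow> bool" where
  "usep N adj X Y Z \<longleftrightarrow> (\<forall>vs. upath N adj vs \<and>
      ((hd vs \<in> X \<and> last vs \<in> Y) \<or> (hd vs \<in> Y \<and> last vs \<in> X))
      \<longrightarrow> set vs \<inter> Z \<noteq> {})"

end

theory Submission
  imports Defs
begin

definition ok_mid :: "('a \<times> 'a) set \<Rightarrow> 'a set \<Rightarrow> 'a \<Rightarrow> bool option \<Rightarrow> ekind \<Rightarrow> bool" where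
  "ok_mid E Z v h k \<longleftrightarrow> (case h of None \<Rightarrow> True
      | Some b \<Rightarrow> (if b \<and> k \<noteq> Fwd then v \<in> Anc E Z else v \<notin> Z))"

inductive dw :: "'a set \<Rightarrow> ('a \<times> 'a) set \<Rightarrow> 'a set set \<Rightarrow> 'a set \<Rightarrow> 'a \<Rightarrow> 'a \<Rightarrow> bool option \<Rightarrow> bool"
  for V E H Z x where
  dw_base: "x \<in> V \<Longrightarrow> dw V E H Z x x None"
| dw_step: "dw V E H Z x v h \<Longrightarrow> edge_ok E H v k w \<Longrightarrow> w \<in> V \<Longrightarrow> ok_mid E Z v h k
     \<Longrightarrow> dw V E H Z x w (Some (k \<noteq> Bwd))"

definition nb :: "('a \<times> 'a) set \<Rightarrow> 'a set \<Rightarrow> 'a list \<Rightarrow> ekind list \<Rightarrow> bool" where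
  "nb E Z vs es \<longleftrightarrow> (\<forall>i. 0 < i \<and> i < length vs - 1 \<longrightarrow>
     \<not> ((collider es i \<and> vs ! i \<notin> Anc E Z) \<or> (\<not> collider es i \<and> vs ! i \<in> Z)))"

lemma blocked_iff: "blocked E Z vs es \<longleftrightarrow> hd vs \<in> Z \<or> last vs \<in> Z \<or> \<not> nb E Z vs es"
  unfolding blocked_def nb_def by blast

lemma collider_iff: "collider es n \<longleftrightarrow> (es ! (n - 1) \<noteq> Bwd \<and> es ! n \<noteq> Fwd)"
  unfolding collider_def by (cases "es ! (n - 1)"; cases "es ! n"; simp)

lemma path_dw:
  assumes p: "is_path V E H vs es" and nbv: "nb E Z vs es"
  shows "n < length vs \<Longrightarrow> dw V E H Z (vs ! 0) (vs ! n) (if n = 0 then None else Some (es ! (n - 1) \<noteq> Bwd))"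
proof (induction n)
  case 0
  then show ?case using p by (auto simp: is_path_def intro!: dw_base)
next
  case (Suc n)
  hence IH: "dw V E H Z (vs ! 0) (vs ! n) (if n = 0 then None else Some (es ! (n - 1) \<noteq> Bwd))" by simp
  have len: "n < length es" using Suc.prems p by (auto simp: is_path_def)
  have e: "edge_ok E H (vs ! n) (es ! n) (vs ! Suc n)" using p len by (auto simp: is_path_def)
  have w: "vs ! Suc n \<in> V" using p Suc.prems nth_mem by (fastforce simp: is_path_def)
  have ok: "ok_mid E Z (vs ! n) (if n = 0 then None else Some (es ! (n - 1) \<noteq> Bwd)) (es ! n)"
  proof (cases "n = 0")
    case True then show ?thesis by (simp add: ok_mid_def)
  next
    case False
    hence "0 < n \<and> n < length vs - 1" using Suc.prems by simp
    hence "\<not> ((collider es n \<and> vs ! n \<notin> Anc E Z) \<or> (\<not> collider es n \<and> vs ! n \<in> Z))"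
      using nbv unfolding nb_def by blast
    then show ?thesis using False by (auto simp: ok_mid_def collider_iff)
  qed
  show ?case using dw_step[OF IH e w ok] by simp
qed

lemma dw_None: "dw V E H Z x v None \<Longrightarrow> v = x"
  by (cases rule: dw.cases) auto

lemma dw_V: "dw V E H Z x v h \<Longrightarrow> v \<in> V"
  by (induction rule: dw.induct) auto

lemma dw_path:
  assumes "dw V E H Z x v h"
  shows "\<exists>vs es. is_path V E H vs es \<and> hd vs = x \<and> last vs = v \<and> nb E Z vs es
      \<and> h = (if length vs = 1 then None else Some (last es \<noteq> Bwd))"
  using assms
proof (induction rule: dw.induct)
  case dw_base
  then show ?case
    by (intro exI[of _ "[x]"] exI[of _ "[]"]) (simp add: is_path_def nb_def)
next
  case (dw_step v h k w)
  then obtain vs es where P: "is_path V E H vs es" "hd vs = x" "last vs = v" "nb E Z vs es"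
      "h = (if length vs = 1 then None else Some (last es \<noteq> Bwd))" by blast
  have ne: "vs \<noteq> []" and sub: "set vs \<subseteq> V" and le: "length es = length vs - 1"
    and ed: "\<forall>i<length es. edge_ok E H (vs ! i) (es ! i) (vs ! Suc i)"
    using P(1) by (auto simp: is_path_def)
  have lv: "vs ! (length vs - 1) = v" using P(3) ne by (simp add: last_conv_nth)
  have path': "is_path V E H (vs @ [w]) (es @ [k])"
    unfolding is_path_def
  proof (intro conjI allI impI)
    show "set (vs @ [w]) \<subseteq> V" using sub dw_step by auto
    show "length (es @ [k]) = length (vs @ [w]) - 1" using le ne by simp
    fix i assume i: "i < length (es @ [k])"
    show "edge_ok E H ((vs @ [w]) ! i) ((es @ [k]) ! i) ((vs @ [w]) ! Suc i)"
    proof (cases "i < length es")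
      case True
      hence "i < length vs" "Suc i < length vs" using le by auto
      then show ?thesis using ed True by (simp add: nth_append)
    next
      case False
      hence "i = length es" using i by simp
      then show ?thesis using le ne lv dw_step by (simp add: nth_append)
    qed
  qed simp
  have nb': "nb E Z (vs @ [w]) (es @ [k])"
    unfolding nb_def
  proof (intro allI impI)
    fix i assume i: "0 < i \<and> i < length (vs @ [w]) - 1"
    show "\<not> ((collider (es @ [k]) i \<and> (vs @ [w]) ! i \<notin> Anc E Z) \<or>
             (\<not> collider (es @ [k]) i \<and> (vs @ [w]) ! i \<in> Z))"
    proof (cases "i < length vs - 1")
      case True
      have "i < length es" "i - 1 < length es" using True le i by auto
      hence "collider (es @ [k]) i = collider es i"
        by (simp add: collider_def nth_append)
      moreover have "(vs @ [w]) ! i = vs ! i" using True by (auto simp: nth_append)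
      ultimately show ?thesis using P(4) True i unfolding nb_def by auto
    next
      case False
      hence ii: "i = length es" using i le by (simp; arith)
      have "length vs \<noteq> 1" using i by simp
      hence hh: "h = Some (last es \<noteq> Bwd)" using P(5) by simp
      have les: "es \<noteq> []" using ii i by auto
      have "collider (es @ [k]) i \<longleftrightarrow> (last es \<noteq> Bwd \<and> k \<noteq> Fwd)"
        using ii les by (simp add: collider_iff nth_append last_conv_nth)
      moreover have "(vs @ [w]) ! i = v" using ii le ne lv by (simp add: nth_append)
      ultimately show ?thesis using dw_step(4) hh by (auto simp: ok_mid_def)
    qed
  qed
  show ?case
    by (intro exI[of _ "vs @ [w]"] exI[of _ "es @ [k]"]) (use path' nb' P ne in auto)
qed

definition bichain :: "'a set set \<Rightarrow> 'a list \<Rightarrow> bool" where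
  "bichain H cs \<longleftrightarrow> (\<forall>i. Suc i < length cs \<longrightarrow> bidir H (cs ! i) (cs ! Suc i))"

lemma bichain_single: "bichain H [c]" by (simp add: bichain_def)

lemma bichain_two: "bidir H a b \<Longrightarrow> bichain H [a, b]"
  by (auto simp: bichain_def less_Suc_eq)

lemma bichain_snoc:
  assumes "cs \<noteq> []" "bichain H cs" "bidir H (last cs) w"
  shows "bichain H (cs @ [w])"
  unfolding bichain_def
proof (intro allI impI)
  fix i assume i: "Suc i < length (cs @ [w])"
  show "bidir H ((cs @ [w]) ! i) ((cs @ [w]) ! Suc i)"
  proof (cases "Suc i < length cs")
    case True then show ?thesis using assms(2) by (simp add: bichain_def nth_append)
  next
    case False
    hence "i = length cs - 1" "Suc i = length cs" using i by auto
    then show ?thesis using assms by (simp add: nth_append last_conv_nth)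
  qed
qed

lemma bichain_Cons: "bichain H (a # b # cs) \<longleftrightarrow> bidir H a b \<and> bichain H (b # cs)"
  unfolding bichain_def
  apply (rule iffI)
   apply (intro conjI)
    apply force
   apply (intro allI impI)
   apply (drule_tac x="Suc i" in spec) apply simp
  apply (intro allI impI)
  apply (case_tac i) apply auto
  done

lemma upath_snoc:
  assumes "upath N adj ms" "w \<in> N" "adj (last ms) w"
  shows "upath N adj (ms @ [w])"
  unfolding upath_def
proof (intro conjI allI impI)
  show "ms @ [w] \<noteq> []" by simp
  show "set (ms @ [w]) \<subseteq> N" using assms by (auto simp: upath_def)
  fix i assume i: "Suc i < length (ms @ [w])"
  show "adj ((ms @ [w]) ! i) ((ms @ [w]) ! Suc i)"
  proof (cases "Suc i < length ms")
    case True then show ?thesis using assms(1) by (simp add: upath_def nth_append)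
  next
    case False
    hence "i = length ms - 1" "Suc i = length ms" using i by auto
    then show ?thesis using assms by (simp add: nth_append last_conv_nth upath_def)
  qed
qed

lemma upath_Cons: "upath N adj (a # b # ms) \<longleftrightarrow> a \<in> N \<and> adj a b \<and> upath N adj (b # ms)"
proof
  assume u: "upath N adj (a # b # ms)"
  have "\<forall>i. Suc i < length (b # ms) \<longrightarrow> adj ((b # ms) ! i) ((b # ms) ! Suc i)"
  proof (intro allI impI)
    fix i assume "Suc i < length (b # ms)"
    then show "adj ((b # ms) ! i) ((b # ms) ! Suc i)"
      using u unfolding upath_def by (metis Suc_less_eq length_Cons nth_Cons_Suc)
  qed
  then show "a \<in> N \<and> adj a b \<and> upath N adj (b # ms)" using u unfolding upath_def by force
next
  assume u: "a \<in> N \<and> adj a b \<and> upath N adj (b # ms)"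
  have "\<forall>i. Suc i < length (a # b # ms) \<longrightarrow> adj ((a # b # ms) ! i) ((a # b # ms) ! Suc i)"
  proof (intro allI impI)
    fix i assume i: "Suc i < length (a # b # ms)"
    show "adj ((a # b # ms) ! i) ((a # b # ms) ! Suc i)"
    proof (cases i)
      case 0 then show ?thesis using u by simp
    next
      case (Suc j) then show ?thesis using u i unfolding upath_def by simp
    qed
  qed
  then show "upath N adj (a # b # ms)" using u unfolding upath_def by auto
qed

lemma moral_adjI:
  "u \<noteq> w \<Longrightarrow> cs \<noteq> [] \<Longrightarrow> set cs \<subseteq> B \<Longrightarrow> bichain H cs \<Longrightarrow> u \<in> {hd cs} \<union> Pa E (hd cs)
   \<Longrightarrow> w \<in> {last cs} \<union> Pa E (last cs) \<Longrightarrow> moral_adj B E H u w"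
  unfolding moral_adj_def bichain_def by blast

lemma set_butlast_last: "ms \<noteq> [] \<Longrightarrow> set ms = set (butlast ms) \<union> {last ms}"
  by (metis append_butlast_last_id set_append empty_set list.simps(15) Un_insert_right sup_bot.right_neutral)


definition MI where
  "MI B E H Z x v h \<longleftrightarrow> (\<exists>ms u. upath B (moral_adj B (induced_E E B) (induced_H H B)) ms
      \<and> hd ms = x \<and> last ms = u \<and> set (butlast ms) \<inter> Z = {}
      \<and> (if h = Some True then u \<notin> Z \<and> (\<exists>cs. cs \<noteq> [] \<and> set cs \<subseteq> B
             \<and> bichain (induced_H H B) cs \<and> last cs = v \<and> u \<in> {hd cs} \<union> Pa (induced_E E B) (hd cs))
          else u = v))"

lemma MI_ext:
  assumes "upath B (moral_adj B (induced_E E B) (induced_H H B)) ms" "last ms = u"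
    "set (butlast ms) \<inter> Z = {}" "u \<notin> Z" "w \<in> B"
    "u \<noteq> w \<Longrightarrow> moral_adj B (induced_E E B) (induced_H H B) u w"
  shows "\<exists>ms'. upath B (moral_adj B (induced_E E B) (induced_H H B)) ms' \<and> hd ms' = hd ms
      \<and> last ms' = w \<and> set (butlast ms') \<inter> Z = {}"
proof (cases "u = w")
  case True then show ?thesis using assms by blast
next
  case False
  have ne: "ms \<noteq> []" using assms(1) by (simp add: upath_def)
  have "set ms \<inter> Z = {}" using assms(2-4) set_butlast_last[OF ne] by auto
  then show ?thesis using upath_snoc[OF assms(1) assms(5)] assms(2,6) False ne
    by (intro exI[of _ "ms @ [w]"]) auto
qed

lemma dw_moral:
  assumes dw: "dw V E H Z x v h"
    and Bcl: "\<And>a b. (a, b) \<in> E \<Longrightarrow> b \<in> B \<Longrightarrow> a \<in> B"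
    and AZ: "Anc E Z \<subseteq> B" and xB: "x \<in> B" and xZ: "x \<notin> Z"
  shows "(h \<noteq> Some True \<longrightarrow> v \<in> B) \<and> (v \<in> B \<longrightarrow> MI B E H Z x v h)"
  using dw
proof (induction rule: dw.induct)
  case dw_base
  then show ?case using xB unfolding MI_def
    by (intro conjI impI exI[of _ "[x]"] exI[of _ x]) (auto simp: upath_def)
next
  case (dw_step v h k w)
  let ?adj = "moral_adj B (induced_E E B) (induced_H H B)"
  define col where "col = (h = Some True \<and> k \<noteq> Fwd)"
  have colZ: "col \<Longrightarrow> v \<in> Anc E Z" using dw_step.hyps(4) unfolding col_def ok_mid_def by auto
  have ncolZ: "\<not> col \<Longrightarrow> v \<notin> Z"
  proof -
    assume nc: "\<not> col"
    show "v \<notin> Z"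
    proof (cases h)
      case None then show ?thesis using dw_None dw_step.hyps(1) xZ by fastforce
    next
      case (Some b) then show ?thesis using dw_step.hyps(4) nc unfolding col_def ok_mid_def
        by (cases b) auto
    qed
  qed
  have vB1: "k \<noteq> Fwd \<Longrightarrow> v \<in> B"
    using colZ AZ dw_step.IH unfolding col_def by blast
  show ?case
  proof (cases k)
    case Bwd
    hence e: "(w, v) \<in> E" using dw_step.hyps(2) by (simp add: edge_ok_def)
    have vB: "v \<in> B" using vB1 Bwd by simp
    have wB: "w \<in> B" using Bcl e vB by blast
    obtain ms u where M: "upath B ?adj ms" "hd ms = x" "last ms = u" "set (butlast ms) \<inter> Z = {}"
      "if h = Some True then u \<notin> Z \<and> (\<exists>cs. cs \<noteq> [] \<and> set cs \<subseteq> B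
             \<and> bichain (induced_H H B) cs \<and> last cs = v \<and> u \<in> {hd cs} \<union> Pa (induced_E E B) (hd cs))
          else u = v"
      using dw_step.IH vB unfolding MI_def by blast
    have wPa: "w \<in> Pa (induced_E E B) v" using e vB wB by (simp add: Pa_def induced_E_def)
    have "\<exists>ms'. upath B ?adj ms' \<and> hd ms' = hd ms \<and> last ms' = w \<and> set (butlast ms') \<inter> Z = {}"
    proof (cases "h = Some True")
      case True
      then obtain cs where C: "u \<notin> Z" "cs \<noteq> []" "set cs \<subseteq> B" "bichain (induced_H H B) cs" "last cs = v"
        "u \<in> {hd cs} \<union> Pa (induced_E E B) (hd cs)" using M(5) by auto
      show ?thesis
        by (rule MI_ext[OF M(1) M(3) M(4) C(1) wB]) (rule moral_adjI[of _ _ cs], use C wPa in auto)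
    next
      case False
      hence uv: "u = v" using M(5) by simp
      have "v \<notin> Z" using ncolZ False unfolding col_def by simp
      then show ?thesis
        by (intro MI_ext[OF M(1) M(3) M(4) _ wB]) (use uv in simp,
            rule moral_adjI[of _ _ "[v]"], use wPa vB uv in \<open>auto simp: bichain_single\<close>)
    qed
    then show ?thesis using Bwd wB M(2) unfolding MI_def by auto
  next
    case Fwd
    hence e: "(v, w) \<in> E" using dw_step.hyps(2) by (simp add: edge_ok_def)
    have vZ: "v \<notin> Z" using ncolZ Fwd unfolding col_def by simp
    have "MI B E H Z x w (Some True)" if wB: "w \<in> B"
    proof -
      have vB: "v \<in> B" using Bcl e wB by blast
      have hB: "h \<noteq> Some True \<longrightarrow> v \<in> B" using vB by simp
      obtain ms u where M: "upath B ?adj ms" "hd ms = x" "last ms = u" "set (butlast ms) \<inter> Z = {}"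
        "if h = Some True then u \<notin> Z \<and> (\<exists>cs. cs \<noteq> [] \<and> set cs \<subseteq> B
             \<and> bichain (induced_H H B) cs \<and> last cs = v \<and> u \<in> {hd cs} \<union> Pa (induced_E E B) (hd cs))
          else u = v"
        using dw_step.IH vB unfolding MI_def by blast
      have vPa: "v \<in> Pa (induced_E E B) w" using e vB wB by (simp add: Pa_def induced_E_def)
      have "\<exists>ms'. upath B ?adj ms' \<and> hd ms' = hd ms \<and> last ms' = v \<and> set (butlast ms') \<inter> Z = {}"
      proof (cases "h = Some True")
        case True
        then obtain cs where C: "u \<notin> Z" "cs \<noteq> []" "set cs \<subseteq> B" "bichain (induced_H H B) cs" "last cs = v"
          "u \<in> {hd cs} \<union> Pa (induced_E E B) (hd cs)" using M(5) by auto
        show ?thesis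
          by (rule MI_ext[OF M(1) M(3) M(4) C(1) vB]) (rule moral_adjI[of _ _ cs], use C in auto)
      next
        case False
        then show ?thesis using M by auto
      qed
      then obtain ms' where "upath B ?adj ms'" "hd ms' = x" "last ms' = v" "set (butlast ms') \<inter> Z = {}"
        using M(2) by auto
      then show ?thesis unfolding MI_def using vZ vPa wB
        by (intro exI[of _ ms'] exI[of _ v]) (auto intro!: exI[of _ "[w]"] simp: bichain_single)
    qed
    then show ?thesis using Fwd by simp
  next
    case Bi
    hence e: "bidir H v w" using dw_step.hyps(2) by (simp add: edge_ok_def)
    have vB: "v \<in> B" using vB1 Bi by simp
    have "MI B E H Z x w (Some True)" if wB: "w \<in> B"
    proof -
      obtain ms u where M: "upath B ?adj ms" "hd ms = x" "last ms = u" "set (butlast ms) \<inter> Z = {}"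
        "if h = Some True then u \<notin> Z \<and> (\<exists>cs. cs \<noteq> [] \<and> set cs \<subseteq> B
             \<and> bichain (induced_H H B) cs \<and> last cs = v \<and> u \<in> {hd cs} \<union> Pa (induced_E E B) (hd cs))
          else u = v"
        using dw_step.IH vB unfolding MI_def by blast
      have eB: "bidir (induced_H H B) v w" using e vB wB by (simp add: bidir_def induced_H_def)
      show ?thesis
      proof (cases "h = Some True")
        case True
        then obtain cs where C: "u \<notin> Z" "cs \<noteq> []" "set cs \<subseteq> B" "bichain (induced_H H B) cs" "last cs = v"
          "u \<in> {hd cs} \<union> Pa (induced_E E B) (hd cs)" using M(5) by auto
        have "bichain (induced_H H B) (cs @ [w])" using bichain_snoc[OF C(2) C(4)] eB C(5) by simp
        then show ?thesis unfolding MI_def using M C wB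
          by (intro exI[of _ ms] exI[of _ u]) (auto intro!: exI[of _ "cs @ [w]"])
      next
        case False
        hence uv: "u = v" using M(5) by simp
        have "v \<notin> Z" using ncolZ False unfolding col_def by simp
        then show ?thesis unfolding MI_def using M uv vB wB bichain_two[OF eB]
          by (intro exI[of _ ms] exI[of _ u]) (auto intro!: exI[of _ "[v, w]"])
      qed
    qed
    then show ?thesis using Bi by simp
  qed
qed


lemma Anc_step: "(a, b) \<in> E\<^sup>* \<Longrightarrow> b \<in> Anc E Z \<Longrightarrow> a \<in> Anc E Z"
proof -
  assume ab: "(a, b) \<in> E\<^sup>*" and b: "b \<in> Anc E Z"
  then obtain z where z: "z \<in> Z" "(b, z) \<in> E\<^sup>*" unfolding Anc_def by blast
  have "(a, z) \<in> E\<^sup>*" using rtrancl_trans[OF ab z(2)] .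
  then show "a \<in> Anc E Z" using z(1) unfolding Anc_def by blast
qed

lemma Z_Anc: "Z \<subseteq> Anc E Z" unfolding Anc_def by auto

lemma fwd_ext:
  assumes "(v, t) \<in> E\<^sup>*" and EV: "E \<subseteq> V \<times> V"
  shows "dw V E H Z x v h \<Longrightarrow> v \<notin> Anc E Z \<Longrightarrow> \<exists>h'. dw V E H Z x t h'"
  using assms(1)
proof (induction rule: rtrancl_induct)
  case base then show ?case by (intro exI[of _ h])
next
  case (step u t)
  obtain h' where d: "dw V E H Z x u h'" using step.IH[OF step.prems] by (elim exE)
  have "u \<notin> Anc E Z" using Anc_step[OF step(1), of Z] step.prems(2) by blast
  hence uZ: "u \<notin> Z" using Z_Anc[of Z E] by blast
  have ok: "ok_mid E Z u h' Fwd" using uZ by (cases h') (auto simp: ok_mid_def)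
  have tV: "t \<in> V" using step(2) EV by auto
  have eo: "edge_ok E H u Fwd t" using step(2) by (simp add: edge_ok_def)
  show ?case using dw_step[OF d eo tV ok] by blast
qed

lemma bwd_ext:
  assumes "(v, t) \<in> E\<^sup>*" and EV: "E \<subseteq> V \<times> V" and tV: "t \<in> V"
  shows "v \<notin> Anc E Z \<Longrightarrow> \<exists>h. dw V E H Z t v h \<and> h \<noteq> Some True"
  using assms(1)
proof (induction rule: converse_rtrancl_induct)
  case base show ?case using dw_base[OF tV] by auto
next
  case (step v u)
  have "u \<notin> Anc E Z" using Anc_step[OF r_into_rtrancl[OF step(1)], of Z] step.prems by blast
  then obtain h' where d: "dw V E H Z t u h'" "h' \<noteq> Some True" using step.IH by meson
  have uZ: "u \<notin> Z" using \<open>u \<notin> Anc E Z\<close> Z_Anc[of Z E] by blast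
  have ok: "ok_mid E Z u h' Bwd" using uZ d(2) by (cases h') (auto simp: ok_mid_def)
  have vV: "v \<in> V" using step(1) EV by auto
  have eo: "edge_ok E H u Bwd v" using step(1) by (simp add: edge_ok_def)
  have "dw V E H Z t v (Some False)" using dw_step[OF d(1) eo vV ok] by simp
  then show ?case by blast
qed

definition good where
  "good V E H Z X v \<longleftrightarrow> (\<exists>x h. x \<in> X \<and> x \<notin> Z \<and> dw V E H Z x v h
      \<and> (if h = Some True then v \<in> Anc E Z else v \<notin> Z))"

definition dconn where
  "dconn V E H Z X Y \<longleftrightarrow> (\<exists>x y h. x \<in> X \<and> x \<notin> Z \<and> y \<in> Y \<and> y \<notin> Z \<and> dw V E H Z x y h)"

lemma arrival:
  assumes d: "dw V E H Z x v (Some True)" and x: "x \<in> X" "x \<notin> Z"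
    and vA: "v \<in> Anc E (X \<union> Y \<union> Z)" and EV: "E \<subseteq> V \<times> V" and XV: "X \<subseteq> V"
  shows "good V E H Z X v \<or> dconn V E H Z X Y"
proof (cases "v \<in> Anc E Z")
  case True then show ?thesis using d x unfolding good_def by fastforce
next
  case False
  obtain t where t: "t \<in> X \<union> Y \<union> Z" "(v, t) \<in> E\<^sup>*" using vA unfolding Anc_def by blast
  have tA: "t \<notin> Anc E Z" using Anc_step[OF t(2), of Z] False by blast
  hence tZ: "t \<notin> Z" using Z_Anc[of Z E] by blast
  have vZ: "v \<notin> Z" using False Z_Anc[of Z E] by blast
  show ?thesis
  proof (cases "t \<in> Y")
    case True
    obtain h' where "dw V E H Z x t h'" using fwd_ext[OF t(2) EV d False] by blast
    then show ?thesis using True tZ x unfolding dconn_def by blast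
  next
    case False
    hence tX: "t \<in> X" using t(1) tZ by blast
    obtain h where "dw V E H Z t v h" "h \<noteq> Some True"
      using bwd_ext[OF t(2) EV _ \<open>v \<notin> Anc E Z\<close>] tX XV by blast
    then show ?thesis using tX tZ vZ unfolding good_def by auto
  qed
qed

lemma good_cont:
  assumes "good V E H Z X v" "k \<noteq> Fwd \<or> v \<notin> Z"
  obtains x h where "x \<in> X" "x \<notin> Z" "dw V E H Z x v h" "ok_mid E Z v h k"
proof -
  obtain x h where g: "x \<in> X" "x \<notin> Z" "dw V E H Z x v h"
    "if h = Some True then v \<in> Anc E Z else v \<notin> Z" using assms(1) unfolding good_def by blast
  have "ok_mid E Z v h k"
  proof (cases h)
    case None then show ?thesis by (simp add: ok_mid_def)
  next
    case (Some b) then show ?thesis using g(4) assms(2) by (cases b) (auto simp: ok_mid_def)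
  qed
  then show ?thesis using g that by blast
qed

locale setting =
  fixes V :: "'a set" and E :: "('a \<times> 'a) set" and H :: "'a set set" and Z X Y A :: "'a set"
  assumes EV: "E \<subseteq> V \<times> V" and XV: "X \<subseteq> V" and AV: "A \<subseteq> V"
    and AA: "A \<subseteq> Anc E (X \<union> Y \<union> Z)"
begin

lemma chain_good:
  "cs \<noteq> [] \<Longrightarrow> bichain (induced_H H A) cs \<Longrightarrow> set cs \<subseteq> A \<Longrightarrow> good V E H Z X (hd cs)
   \<Longrightarrow> good V E H Z X (last cs) \<or> dconn V E H Z X Y"
proof (induction cs)
  case Nil then show ?case by simp
next
  case (Cons c rest)
  show ?case
  proof (cases rest)
    case Nil then show ?thesis using Cons by simp
  next
    case (Cons c' rest')
    have b: "bidir (induced_H H A) c c'" and br: "bichain (induced_H H A) rest"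
      using Cons.prems(2) \<open>rest = c' # rest'\<close> by (simp_all add: bichain_Cons)
    hence bH: "bidir H c c'" by (auto simp: bidir_def induced_H_def)
    obtain x h where g: "x \<in> X" "x \<notin> Z" "dw V E H Z x c h" "ok_mid E Z c h Bi"
      using good_cont[of V E H Z X c Bi] Cons.prems(4) by auto
    have c'A: "c' \<in> A" using Cons.prems(3) Cons by auto
    have "dw V E H Z x c' (Some True)"
      using dw_step[OF g(3) _ _ g(4), of c'] bH c'A AV by (auto simp: edge_ok_def)
    hence "good V E H Z X c' \<or> dconn V E H Z X Y"
      using arrival[OF _ g(1,2) _ EV XV] c'A AA by blast
    then show ?thesis
      using Cons.IH[OF _ br] Cons.prems(3) \<open>rest = c' # rest'\<close> by auto
  qed
qed

lemma moral_good:
  assumes g: "good V E H Z X u" and uZ: "u \<notin> Z" and wZ: "w \<notin> Z"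
    and m: "moral_adj A (induced_E E A) (induced_H H A) u w"
  shows "good V E H Z X w \<or> dconn V E H Z X Y"
proof -
  obtain cs where C: "cs \<noteq> []" "set cs \<subseteq> A" "bichain (induced_H H A) cs"
    "u \<in> {hd cs} \<union> Pa (induced_E E A) (hd cs)" "w \<in> {last cs} \<union> Pa (induced_E E A) (last cs)"
    using m unfolding moral_adj_def bichain_def by blast
  have hA: "hd cs \<in> A" "last cs \<in> A" using C(1,2) by auto
  have g1: "good V E H Z X (hd cs) \<or> dconn V E H Z X Y"
  proof (cases "u = hd cs")
    case True then show ?thesis using g by simp
  next
    case False
    hence e: "(u, hd cs) \<in> E" using C(4) by (auto simp: Pa_def induced_E_def)
    obtain x h where gg: "x \<in> X" "x \<notin> Z" "dw V E H Z x u h" "ok_mid E Z u h Fwd"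
      using good_cont[of V E H Z X u Fwd] g uZ by auto
    have "dw V E H Z x (hd cs) (Some True)"
      using dw_step[OF gg(3) _ _ gg(4), of "hd cs"] e hA AV by (auto simp: edge_ok_def)
    then show ?thesis using arrival[OF _ gg(1,2) _ EV XV] hA AA by blast
  qed
  have g2: "good V E H Z X (last cs) \<or> dconn V E H Z X Y"
    using g1 chain_good[OF C(1,3,2)] by blast
  show ?thesis
  proof (cases "w = last cs")
    case True then show ?thesis using g2 by simp
  next
    case False
    hence e: "(w, last cs) \<in> E" and wA: "w \<in> A" using C(5) by (auto simp: Pa_def induced_E_def)
    show ?thesis
    proof (cases "dconn V E H Z X Y")
      case True then show ?thesis by simp
    next
      case False
      obtain x h where gg: "x \<in> X" "x \<notin> Z" "dw V E H Z x (last cs) h" "ok_mid E Z (last cs) h Bwd"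
        using good_cont[of V E H Z X "last cs" Bwd] g2 False by auto
      have "dw V E H Z x w (Some False)"
        using dw_step[OF gg(3) _ _ gg(4), of w] e wA AV by (auto simp: edge_ok_def)
      then show ?thesis using gg(1,2) wZ unfolding good_def by auto
    qed
  qed
qed

lemma upath_good:
  "upath A (moral_adj A (induced_E E A) (induced_H H A)) ms \<Longrightarrow> set ms \<inter> Z = {}
   \<Longrightarrow> good V E H Z X (hd ms) \<Longrightarrow> good V E H Z X (last ms) \<or> dconn V E H Z X Y"
proof (induction ms)
  case Nil then show ?case by (simp add: upath_def)
next
  case (Cons a rest)
  show ?case
  proof (cases rest)
    case Nil then show ?thesis using Cons by simp
  next
    case (Cons b rest')
    have m: "moral_adj A (induced_E E A) (induced_H H A) a b"
      and u: "upath A (moral_adj A (induced_E E A) (induced_H H A)) rest"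
      using Cons.prems(1) \<open>rest = b # rest'\<close> by (simp_all add: upath_Cons)
    have "good V E H Z X b \<or> dconn V E H Z X Y"
      using moral_good[OF _ _ _ m] Cons.prems(2,3) Cons by auto
    then show ?thesis using Cons.IH[OF u] Cons.prems(2) \<open>rest = b # rest'\<close> by auto
  qed
qed

lemma main_dir2:
  assumes "upath A (moral_adj A (induced_E E A) (induced_H H A)) ms" "set ms \<inter> Z = {}"
    "hd ms \<in> X" "last ms \<in> Y"
  shows "dconn V E H Z X Y"
proof -
  have ne: "ms \<noteq> []" using assms(1) by (simp add: upath_def)
  have hZ: "hd ms \<notin> Z" "last ms \<notin> Z" using assms(2) ne hd_in_set last_in_set by blast+
  have "good V E H Z X (hd ms)" unfolding good_def
    using assms(3) hZ XV by (intro exI[of _ "hd ms"] exI[of _ None]) (auto intro: dw_base)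
  then have "good V E H Z X (last ms) \<or> dconn V E H Z X Y"
    using upath_good[OF assms(1,2)] by blast
  then show ?thesis using assms(4) hZ unfolding good_def dconn_def by blast
qed

end


lemma MI_final:
  assumes "MI B E H Z x v h" "v \<in> B" "v \<notin> Z"
  shows "\<exists>ms. upath B (moral_adj B (induced_E E B) (induced_H H B)) ms \<and> hd ms = x
     \<and> last ms = v \<and> set ms \<inter> Z = {}"
proof -
  obtain ms u where M: "upath B (moral_adj B (induced_E E B) (induced_H H B)) ms" "hd ms = x"
    "last ms = u" "set (butlast ms) \<inter> Z = {}"
    "if h = Some True then u \<notin> Z \<and> (\<exists>cs. cs \<noteq> [] \<and> set cs \<subseteq> B
             \<and> bichain (induced_H H B) cs \<and> last cs = v \<and> u \<in> {hd cs} \<union> Pa (induced_E E B) (hd cs))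
          else u = v" using assms(1) unfolding MI_def by blast
  have "\<exists>ms'. upath B (moral_adj B (induced_E E B) (induced_H H B)) ms' \<and> hd ms' = hd ms
      \<and> last ms' = v \<and> set (butlast ms') \<inter> Z = {}"
  proof (cases "h = Some True")
    case True
    then obtain cs where C: "u \<notin> Z" "cs \<noteq> []" "set cs \<subseteq> B" "bichain (induced_H H B) cs" "last cs = v"
      "u \<in> {hd cs} \<union> Pa (induced_E E B) (hd cs)" using M(5) by auto
    show ?thesis
      by (rule MI_ext[OF M(1) M(3) M(4) C(1) assms(2)]) (rule moral_adjI[of _ _ cs], use C in auto)
  next
    case False then show ?thesis using M by auto
  qed
  then obtain ms' where M': "upath B (moral_adj B (induced_E E B) (induced_H H B)) ms'" "hd ms' = x"
      "last ms' = v" "set (butlast ms') \<inter> Z = {}" using M(2) by auto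
  have "ms' \<noteq> []" using M'(1) by (simp add: upath_def)
  then have "set ms' \<inter> Z = {}" using set_butlast_last[of ms'] M'(3,4) assms(3) by auto
  then show ?thesis using M' by blast
qed

lemma Anc_sub: "S \<subseteq> V \<Longrightarrow> E \<subseteq> V \<times> V \<Longrightarrow> Anc E S \<subseteq> V"
proof
  fix u assume S: "S \<subseteq> V" and EV: "E \<subseteq> V \<times> V" and u: "u \<in> Anc E S"
  then obtain v where v: "v \<in> S" "(u, v) \<in> E\<^sup>*" unfolding Anc_def by blast
  from v(2) show "u \<in> V"
  proof (cases rule: converse_rtranclE)
    case base then show ?thesis using v S by auto
  next
    case (step c) then show ?thesis using EV by auto
  qed
qed

lemma Anc_mono: "S \<subseteq> T \<Longrightarrow> Anc E S \<subseteq> Anc E T" unfolding Anc_def by auto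

lemma Anc_closed: "(a, b) \<in> E \<Longrightarrow> b \<in> Anc E S \<Longrightarrow> a \<in> Anc E S"
  using Anc_step[of a b E S] by auto

theorem mainTheorem4:
  fixes V :: "'a set" and E :: "('a \<times> 'a) set" and H :: "'a set set"
    and X Y Z :: "'a set"
  assumes "hedg V E H"
    and "X \<subseteq> V" and "Y \<subseteq> V" and "Z \<subseteq> V"
  defines "A \<equiv> Anc E (X \<union> Y \<union> Z)"
  shows "d_sep V E H X Y Z \<longleftrightarrow>
    usep A (moral_adj A (induced_E E A) (induced_H H A)) X Y Z"
proof -
  have EV: "E \<subseteq> V \<times> V" using assms(1) by (simp add: hedg_def)
  have "X \<union> Y \<union> Z \<subseteq> V" using assms(2-4) by simp
  hence AV: "A \<subseteq> V" unfolding A_def by (rule Anc_sub[OF _ EV])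
  have XA: "X \<subseteq> A" "Y \<subseteq> A" unfolding A_def Anc_def by auto
  let ?adj = "moral_adj A (induced_E E A) (induced_H H A)"
  have conn_ndsep: "\<not> d_sep V E H X Y Z" if cn: "dconn V E H Z X' Y'"
     and xy: "(X' = X \<and> Y' = Y) \<or> (X' = Y \<and> Y' = X)" for X' Y'
  proof -
    obtain x y h where D: "x \<in> X'" "x \<notin> Z" "y \<in> Y'" "y \<notin> Z" "dw V E H Z x y h"
      using cn unfolding dconn_def by blast
    obtain vs es where P: "is_path V E H vs es" "hd vs = x" "last vs = y" "nb E Z vs es"
      using dw_path[OF D(5)] by blast
    have "\<not> blocked E Z vs es" using P D by (simp add: blocked_iff)
    have "(hd vs \<in> X \<and> last vs \<in> Y) \<or> (hd vs \<in> Y \<and> last vs \<in> X)"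
      using P(2,3) D(1,3) xy by auto
    then show ?thesis using P(1) \<open>\<not> blocked E Z vs es\<close> unfolding d_sep_def by blast
  qed
  show ?thesis
  proof
    assume ds: "d_sep V E H X Y Z"
    show "usep A ?adj X Y Z"
      unfolding usep_def
    proof (intro allI impI)
      fix ms assume ms: "upath A ?adj ms \<and> (hd ms \<in> X \<and> last ms \<in> Y \<or> hd ms \<in> Y \<and> last ms \<in> X)"
      show "set ms \<inter> Z \<noteq> {}"
      proof
        assume msZ: "set ms \<inter> Z = {}"
        show False
        proof (cases "hd ms \<in> X \<and> last ms \<in> Y")
          case True
          interpret setting V E H Z X Y A
            using EV assms(2) AV by unfold_locales (auto simp: A_def)
          have "dconn V E H Z X Y" using main_dir2[of ms] ms msZ True by blast
          then show False using conn_ndsep[of X Y] ds by blast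
        next
          case False
          hence hl: "hd ms \<in> Y" "last ms \<in> X" using ms by auto
          interpret setting V E H Z Y X A
            using EV assms(3) AV by unfold_locales (auto simp: A_def Un_ac)
          have "dconn V E H Z Y X" using main_dir2[of ms] ms msZ hl by blast
          then show False using conn_ndsep[of Y X] ds by blast
        qed
      qed
    qed
  next
    assume us: "usep A ?adj X Y Z"
    show "d_sep V E H X Y Z"
      unfolding d_sep_def
    proof (intro allI impI)
      fix vs es assume pe: "is_path V E H vs es \<and> (hd vs \<in> X \<and> last vs \<in> Y \<or> hd vs \<in> Y \<and> last vs \<in> X)"
      show "blocked E Z vs es"
      proof (rule ccontr)
        assume nbl: "\<not> blocked E Z vs es"
        hence N: "hd vs \<notin> Z" "last vs \<notin> Z" "nb E Z vs es" by (simp_all add: blocked_iff)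
        have ne: "vs \<noteq> []" using pe by (simp add: is_path_def)
        have "dw V E H Z (vs ! 0) (vs ! (length vs - 1))
            (if length vs - 1 = 0 then None else Some (es ! (length vs - 1 - 1) \<noteq> Bwd))"
          using path_dw[OF conjunct1[OF pe] N(3), of "length vs - 1"] ne by simp
        then obtain h where d: "dw V E H Z (hd vs) (last vs) h"
          using ne by (auto simp: hd_conv_nth last_conv_nth)
        have hA: "hd vs \<in> A" "last vs \<in> A" using pe XA by auto
        have Bcl: "a \<in> A" if "(a, b) \<in> E" "b \<in> A" for a b
          using that unfolding A_def by (rule Anc_closed)
        have AZ: "Anc E Z \<subseteq> A" unfolding A_def by (rule Anc_mono) auto
        have mi: "MI A E H Z (hd vs) (last vs) h"
        proof -
          have "(h \<noteq> Some True \<longrightarrow> last vs \<in> A) \<and> (last vs \<in> A \<longrightarrow> MI A E H Z (hd vs) (last vs) h)"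
            by (rule dw_moral[where B=A]) (fact d, fact Bcl, fact AZ, fact hA(1), fact N(1))
          then show ?thesis using hA(2) by blast
        qed
        obtain ms where ms: "upath A ?adj ms" "hd ms = hd vs" "last ms = last vs" "set ms \<inter> Z = {}"
          using MI_final[OF mi hA(2) N(2)] by (elim exE conjE)
        have sp: "upath A ?adj ms \<and> (hd ms \<in> X \<and> last ms \<in> Y \<or> hd ms \<in> Y \<and> last ms \<in> X)
             \<longrightarrow> set ms \<inter> Z \<noteq> {}" using us unfolding usep_def by (rule spec)
        have "set ms \<inter> Z \<noteq> {}" using sp ms(1) pe unfolding ms(2,3) by simp
        then show False using ms(4) by simp
      qed
    qed
  qed
qed

end
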